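(* Let $N\ge2$, $d\ge1$, and let $x(t)$ be a (Carathéodory) solution of $$\dot x_i(t)=\frac{\lambda_i(x)}{N}\sum_{j=1}^N M_{ij}(t)\,\phi_{ij}(x_i,x_j)\,(x_j(t)-x_i(t)),\qquad i=1,\dots,N,$$ with $x_i\in\mathbb{R}^d$, where all $M_{ij}:[0,+\infty)\to[0,1]$ are Lebesgue measurable and $\lambda_i:\mathbb{R}^{Nd}\to\mathbb{R}^+$, $\phi_{ij}:\mathbb{R}^d\times\mathbb{R}^d\to\mathbb{R}^+$ are Lipschitz continuous and strictly positive. Fix $T,\mu>0$ and let $G(t)$ be the $(T,\mu)$-connectivity graph associated to the $M_{ij}$. Define $$\underline m:=\min\{\lambda_i(y)\phi_{ij}(y_i,y_j):\ i,j,\ y\in\mathbb{R}^{Nd},\ |y_k|\le\max_l|x_l(0)|\ \forall k\},$$ $$\overline m:=\max\{\lambda_i(y)\phi_{ij}(y_i,y_j):\ i,j,\ y\in\mathbb{R}^{Nd},\ |y_k|\le\max_l|x_l(0)|\ \forall k\}.$$ Then there exist Lebesgue integrable functions $\widetilde M_{ij}:[0,+\infty)\to[0,\overline m]$ such that $x(t)$ solves the linear system $$\dot x_i=\frac1N\sum_{j=1}^N\widetilde M_{ij}(t)(x_j-x_i),\qquad i=1,\dots,N,$$ and, for every $t\ge0$, the $(T,\underline m\mu)$-connectivity graph $\widetilde G(t)$ associated to the $\widetilde M_{ij}$ contains all arrows of $G(t)$.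
   Context: $|\cdot|$ is the Euclidean norm. Given $T,\mu>0$ and nonnegative measurable functions $M_{ij}$ on $[0,+\infty)$, the $(T,\mu)$-connectivity graph at time $t\ge0$ is the directed graph on nodes $\{1,\dots,N\}$ in which the arrow $i\to j$ exists iff $\frac1T\int_t^{t+T}M_{ij}(s)\,ds\ge\mu$. *)

theory Defs
  imports "HOL-Analysis.Analysis"
begin

text \<open>State of N agents in R^d: a vector of type real^'d^'n, agent i is y$i.\<close>

definition caratheodory_solution ::
  "(real \<Rightarrow> 'a::euclidean_space \<Rightarrow> 'a) \<Rightarrow> (real \<Rightarrow> 'a) \<Rightarrow> bool" where
  "caratheodory_solution F x \<longleftrightarrow>
     (\<forall>t\<ge>0. (\<lambda>s. F s (x s)) absolutely_integrable_on {0..t} \<and>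
             x t = x 0 + integral {0..t} (\<lambda>s. F s (x s)))"

definition conn_graph ::
  "real \<Rightarrow> real \<Rightarrow> ('n \<Rightarrow> 'n \<Rightarrow> real \<Rightarrow> real) \<Rightarrow> real \<Rightarrow> ('n \<times> 'n) set" where
  "conn_graph T \<mu> M t = {(i, j). (1 / T) * integral {t..t+T} (M i j) \<ge> \<mu>}"

definition nonlin_field ::
  "('n::finite \<Rightarrow> real^'d^'n \<Rightarrow> real) \<Rightarrow> ('n \<Rightarrow> 'n \<Rightarrow> real^'d \<Rightarrow> real^'d \<Rightarrow> real)
   \<Rightarrow> ('n \<Rightarrow> 'n \<Rightarrow> real \<Rightarrow> real) \<Rightarrow> real \<Rightarrow> real^'d^'n \<Rightarrow> real^'d^'n" where
  "nonlin_field lam phi M t y =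
     (\<chi> i. (lam i y / real CARD('n)) *\<^sub>R
           (\<Sum>j\<in>UNIV. (M i j t * phi i j (y$i) (y$j)) *\<^sub>R (y$j - y$i)))"

definition lin_field ::
  "('n::finite \<Rightarrow> 'n \<Rightarrow> real \<Rightarrow> real) \<Rightarrow> real \<Rightarrow> real^'d^'n \<Rightarrow> real^'d^'n" where
  "lin_field M t y =
     (\<chi> i. (1 / real CARD('n)) *\<^sub>R (\<Sum>j\<in>UNIV. M i j t *\<^sub>R (y$j - y$i)))"

definition weight_values ::
  "('n::finite \<Rightarrow> real^'d^'n \<Rightarrow> real) \<Rightarrow> ('n \<Rightarrow> 'n \<Rightarrow> real^'d \<Rightarrow> real^'d \<Rightarrow> real)
   \<Rightarrow> real \<Rightarrow> real set" where
  "weight_values lam phi R =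
     {lam i y * phi i j (y$i) (y$j) | i j y. \<forall>k. norm (y$k) \<le> R}"

end

theory Submission imports Defs begin

lemma max_principle:
  fixes p :: "'n::finite \<Rightarrow> real \<Rightarrow> real"
  assumes uc: "\<And>e. e>0 \<Longrightarrow> \<exists>\<delta>>0. \<forall>k \<sigma> \<sigma>'. \<sigma>\<in>{0..t0} \<longrightarrow> \<sigma>'\<in>{0..t0} \<longrightarrow> \<bar>\<sigma>-\<sigma>'\<bar><\<delta> \<longrightarrow> \<bar>p k \<sigma> - p k \<sigma>'\<bar> < e"
  and C: "C \<ge> 0"
  and step: "\<And>k a b U L. 0 \<le> a \<Longrightarrow> a \<le> b \<Longrightarrow> b \<le> t0 \<Longrightarrow> (\<forall>j \<sigma>. \<sigma>\<in>{a..b} \<longrightarrow> p j \<sigma> \<le> U)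
     \<Longrightarrow> (\<forall>\<sigma>\<in>{a..b}. L \<le> p k \<sigma>) \<Longrightarrow> p k b - p k a \<le> (b-a)*C*(U-L)"
  and t0: "0 \<le> t0"
  shows "p k t0 \<le> Max (range (\<lambda>j. p j 0))"
proof -
  define m where "m s = Max (range (\<lambda>j. p j s))" for s
  have pm: "p j s \<le> m s" for j s unfolding m_def by (rule Max_ge) auto
  have mp: "\<exists>j. m s = p j s" for s
  proof -
    have "m s \<in> range (\<lambda>j. p j s)" unfolding m_def by (rule Max_in) auto
    then show ?thesis by auto
  qed
  have "m t0 \<le> m 0"
  proof (rule field_le_epsilon)
    fix e :: real assume e: "e > 0"
    show "m t0 \<le> m 0 + e"
    proof (cases "t0 = 0")
      case True then show ?thesis using e by simp
    next
      case False
      with t0 have tp: "t0 > 0" by simp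
      define \<epsilon> where "\<epsilon> = e / (2*C*t0+1)"
      have den: "2*C*t0+1 > 0" using C t0 by (simp add: add_nonneg_pos)
      have \<epsilon>p: "\<epsilon> > 0" unfolding \<epsilon>_def using e den by simp
      obtain \<delta> where \<delta>: "\<delta> > 0" and ucd: "\<forall>k \<sigma> \<sigma>'. \<sigma>\<in>{0..t0} \<longrightarrow> \<sigma>'\<in>{0..t0} \<longrightarrow> \<bar>\<sigma>-\<sigma>'\<bar><\<delta> \<longrightarrow> \<bar>p k \<sigma> - p k \<sigma>'\<bar> < \<epsilon>"
        using uc[OF \<epsilon>p] by blast
      obtain n :: nat where n: "t0/\<delta> + t0*C < real n" using reals_Archimedean2 by blast
      have tdC: "t0/\<delta> \<ge> 0" "t0*C \<ge> 0" using tp \<delta> C by auto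
      have npos: "real n > 0" using n tdC by linarith
      define h where "h = t0 / real n"
      have hpos: "h > 0" unfolding h_def using tp npos by simp
      have hd: "h < \<delta>"
      proof -
        have "t0/\<delta> < real n" using n tdC by linarith
        then have "t0 < real n * \<delta>" using \<delta> by (simp add: field_simps)
        then show ?thesis unfolding h_def using npos by (simp add: field_simps)
      qed
      have hC: "h*C \<le> 1"
      proof -
        have "t0*C \<le> real n" using n tdC by linarith
        then show ?thesis unfolding h_def using npos by (simp add: field_simps)
      qed
      have nh: "real n * h = t0" unfolding h_def using npos by simp
      have stepm: "m (a+h) \<le> m a + 2*C*h*\<epsilon>" if a: "0 \<le> a" "a + h \<le> t0" for a
      proof -
        have "p k (a+h) \<le> m a + 2*C*h*\<epsilon>" for k
        proof -
          have U: "\<forall>j \<sigma>. \<sigma>\<in>{a..a+h} \<longrightarrow> p j \<sigma> \<le> m a + \<epsilon>"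
          proof (intro allI impI)
            fix j \<sigma> assume s: "\<sigma> \<in> {a..a+h}"
            then have "\<bar>p j \<sigma> - p j a\<bar> < \<epsilon>" using ucd a hpos hd by auto
            then show "p j \<sigma> \<le> m a + \<epsilon>" using pm[of j a] by linarith
          qed
          have L: "\<forall>\<sigma>\<in>{a..a+h}. p k a - \<epsilon> \<le> p k \<sigma>"
          proof
            fix \<sigma> assume s: "\<sigma> \<in> {a..a+h}"
            then have "\<bar>p k \<sigma> - p k a\<bar> < \<epsilon>" using ucd a hpos hd by auto
            then show "p k a - \<epsilon> \<le> p k \<sigma>" by linarith
          qed
          have "p k (a+h) - p k a \<le> (a+h-a)*C*((m a + \<epsilon>) - (p k a - \<epsilon>))"
            using step[OF a(1) _ a(2) U L] hpos by simp
          then have 1: "p k (a+h) \<le> p k a + (h*C)*(m a - p k a) + 2*C*h*\<epsilon>"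
            by (simp add: algebra_simps)
          have "(h*C)*(m a - p k a) \<le> 1 * (m a - p k a)"
            using hC pm[of k a] by (intro mult_right_mono) auto
          then show ?thesis using 1 by simp
        qed
        then show ?thesis using mp[of "a+h"] by metis
      qed
      have ind: "i \<le> n \<Longrightarrow> m (real i * h) \<le> m 0 + 2*C*(real i*h)*\<epsilon>" for i
      proof (induction i)
        case 0 then show ?case by simp
      next
        case (Suc i)
        have a: "0 \<le> real i * h" using hpos by simp
        have b: "real i * h + h \<le> t0"
        proof -
          have "real (Suc i) * h \<le> real n * h" using Suc.prems hpos by (intro mult_right_mono) auto
          then show ?thesis using nh by (simp add: algebra_simps)
        qed
        have "m (real (Suc i) * h) = m (real i * h + h)" by (simp add: algebra_simps)
        also have "\<dots> \<le> m (real i * h) + 2*C*h*\<epsilon>" by (rule stepm[OF a b])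
        also have "\<dots> \<le> m 0 + 2*C*(real i*h)*\<epsilon> + 2*C*h*\<epsilon>" using Suc by simp
        also have "\<dots> = m 0 + 2*C*(real (Suc i)*h)*\<epsilon>" by (simp add: algebra_simps)
        finally show ?case .
      qed
      have "m t0 \<le> m 0 + 2*C*t0*\<epsilon>" using ind[of n] nh by simp
      also have "2*C*t0*\<epsilon> \<le> e"
      proof -
        have "2*C*t0*\<epsilon> = e * ((2*C*t0) / (2*C*t0+1))" unfolding \<epsilon>_def by (simp add: field_simps)
        also have "\<dots> \<le> e * 1" using e den tdC by (intro mult_left_mono) (auto simp: field_simps)
        finally show ?thesis by simp
      qed
      finally show ?thesis by simp
    qed
  qed
  then show ?thesis using pm[of k t0] unfolding m_def by simp
qed

theorem proposition2:
  fixes x :: "real \<Rightarrow> real^'d^'n::finite"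
    and lam :: "'n \<Rightarrow> real^'d^'n \<Rightarrow> real"
    and phi :: "'n \<Rightarrow> 'n \<Rightarrow> real^'d \<Rightarrow> real^'d \<Rightarrow> real"
    and M :: "'n \<Rightarrow> 'n \<Rightarrow> real \<Rightarrow> real"
    and T \<mu> :: real
  assumes N2: "CARD('n) \<ge> 2"
    and M_meas: "\<And>i j. M i j \<in> borel_measurable (lebesgue_on {0..})"
    and M_range: "\<And>i j t. t \<ge> 0 \<Longrightarrow> M i j t \<in> {0..1}"
    and lam_lip: "\<And>i. \<exists>L. L-lipschitz_on UNIV (lam i)"
    and lam_pos: "\<And>i y. lam i y > 0"
    and phi_lip: "\<And>i j. \<exists>L. L-lipschitz_on UNIV (\<lambda>(a, b). phi i j a b)"
    and phi_pos: "\<And>i j a b. phi i j a b > 0"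
    and sol: "caratheodory_solution (nonlin_field lam phi M) x"
    and T_pos: "T > 0" and mu_pos: "\<mu> > 0"
  shows "\<exists>Mt :: 'n \<Rightarrow> 'n \<Rightarrow> real \<Rightarrow> real.
    (\<forall>i j. (\<forall>t\<ge>0. Mt i j absolutely_integrable_on {0..t}) \<and>
           (\<forall>t\<ge>0. Mt i j t \<in> {0..Sup (weight_values lam phi (Max (range (\<lambda>l. norm (x 0 $ l)))))})) \<and>
    caratheodory_solution (lin_field Mt) x \<and>
    (\<forall>t\<ge>0. conn_graph T \<mu> M t \<subseteq>
       conn_graph T (Inf (weight_values lam phi (Max (range (\<lambda>l. norm (x 0 $ l))))) * \<mu>) Mt t)"
proof -
  define f where "f s = nonlin_field lam phi M s (x s)" for s
  define R where "R = Max (range (\<lambda>l. norm (x 0 $ l)))"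
  define W where "W = weight_values lam phi R"
  define w where "w i j s = lam i (x s) * phi i j (x s $ i) (x s $ j)" for i j s
  define Mt where "Mt i j s = M i j s * w i j s" for i j s
  define N where "N = real CARD('n)"
  have Npos: "N > 0" unfolding N_def by simp
  have wpos: "w i j s > 0" for i j s unfolding w_def using lam_pos phi_pos by simp
  have fint: "f integrable_on {0..t}" if "t \<ge> 0" for t
    using sol that unfolding caratheodory_solution_def absolutely_integrable_on_def f_def by blast
  have xeq: "x t = x 0 + integral {0..t} f" if "t \<ge> 0" for t
    using sol that unfolding caratheodory_solution_def f_def by blast
  have xcont: "continuous_on {0..t0} x" if "t0 \<ge> 0" for t0
  proof -
    have "continuous_on {0..t0} (\<lambda>t. x 0 + integral {0..t} f)"
      by (rule continuous_on_add[OF continuous_on_const indefinite_integral_continuous_1[OF fint[OF that]]])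
    moreover have "continuous_on {0..t0} x = continuous_on {0..t0} (\<lambda>t. x 0 + integral {0..t} f)"
      by (rule continuous_on_cong[OF refl]) (rule xeq, simp)
    ultimately show ?thesis by simp
  qed
  have lamc: "continuous_on UNIV (lam i)" for i
    using lam_lip[of i] lipschitz_on_continuous_on by blast
  have phic: "continuous_on UNIV (\<lambda>(a, b). phi i j a b)" for i j
    using phi_lip[of i j] lipschitz_on_continuous_on by blast
  have wcont: "continuous_on {0..t0} (w i j)" if "t0 \<ge> 0" for t0 i j
  proof -
    have 1: "continuous_on {0..t0} (\<lambda>s. lam i (x s))"
      by (rule continuous_on_compose2[OF lamc xcont[OF that]]) auto
    have 2: "continuous_on {0..t0} (\<lambda>s. (x s $ i, x s $ j))"
      by (intro continuous_intros xcont[OF that])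
    have 3: "continuous_on {0..t0} (\<lambda>s. (\<lambda>(a, b). phi i j a b) (x s $ i, x s $ j))"
      by (rule continuous_on_compose2[OF phic 2]) auto
    show ?thesis unfolding w_def using continuous_on_mult[OF 1 3] by simp
  qed
  have inv: "norm (x t $ k) \<le> R" if t: "t \<ge> 0" for t k
  proof -
    define G where "G s = (\<Sum>i\<in>UNIV. \<Sum>j\<in>UNIV. w i j s)" for s
    have Gc: "continuous_on {0..t} G" unfolding G_def
      by (intro continuous_on_sum wcont t)
    obtain s0 where "s0 \<in> {0..t}" and s0: "\<forall>s\<in>{0..t}. G s \<le> G s0"
      using continuous_attains_sup[OF compact_Icc _ Gc] t by auto
    define C where "C = G s0"
    have wC: "w i j s \<le> C" if "s \<in> {0..t}" for i j s
    proof -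
      have "w i j s \<le> (\<Sum>j\<in>UNIV. w i j s)"
        by (rule member_le_sum) (auto intro: less_imp_le wpos)
      also have "\<dots> \<le> G s" unfolding G_def
        by (rule member_le_sum[where f = "\<lambda>i. \<Sum>j\<in>UNIV. w i j s"]) (simp_all add: sum_nonneg less_imp_le wpos)
      finally have "w i j s \<le> G s" .
      moreover have "G s \<le> G s0" using s0 that by blast
      ultimately show ?thesis unfolding C_def by linarith
    qed
    have C0: "C \<ge> 0" using wC[of 0 k k] wpos[of k k 0] t by auto
    define v where "v = x t $ k"
    define p where "p j s = v \<bullet> (x s $ j)" for j s
    have uc: "\<exists>\<delta>>0. \<forall>k \<sigma> \<sigma>'. \<sigma>\<in>{0..t} \<longrightarrow> \<sigma>'\<in>{0..t} \<longrightarrow> \<bar>\<sigma>-\<sigma>'\<bar><\<delta> \<longrightarrow> \<bar>p k \<sigma> - p k \<sigma>'\<bar> < e"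
      if e: "e > 0" for e
    proof -
      have "uniformly_continuous_on {0..t} x"
        by (rule compact_uniformly_continuous[OF xcont[OF t] compact_Icc])
      moreover have e1: "e / (norm v + 1) > 0" using e by (simp add: add_nonneg_pos)
      ultimately obtain \<delta> where \<delta>: "\<delta> > 0" and ud: "\<forall>\<sigma>\<in>{0..t}. \<forall>\<sigma>'\<in>{0..t}. dist \<sigma>' \<sigma> < \<delta> \<longrightarrow> dist (x \<sigma>') (x \<sigma>) < e / (norm v + 1)"
        unfolding uniformly_continuous_on_def by metis
      show ?thesis
      proof (intro exI[of _ \<delta>] conjI \<delta> allI impI)
        fix k \<sigma> \<sigma>' assume s: "\<sigma> \<in> {0..t}" "\<sigma>' \<in> {0..t}" "\<bar>\<sigma> - \<sigma>'\<bar> < \<delta>"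
        have d: "norm (x \<sigma> - x \<sigma>') < e / (norm v + 1)"
          using ud s by (auto simp: dist_norm dist_real_def)
        have "\<bar>p k \<sigma> - p k \<sigma>'\<bar> = \<bar>v \<bullet> (x \<sigma> $ k - x \<sigma>' $ k)\<bar>" unfolding p_def by (simp add: inner_diff_right)
        also have "\<dots> \<le> norm v * norm (x \<sigma> $ k - x \<sigma>' $ k)" by (rule Cauchy_Schwarz_ineq2)
        also have "\<dots> \<le> norm v * norm (x \<sigma> - x \<sigma>')"
          by (intro mult_left_mono norm_ge_zero) (metis Finite_Cartesian_Product.norm_nth_le vector_minus_component norm_ge_zero)
        also have "\<dots> \<le> (norm v + 1) * norm (x \<sigma> - x \<sigma>')" by (simp add: mult_right_mono)
        also have "\<dots> < (norm v + 1) * (e / (norm v + 1))"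
          using d by (intro mult_strict_left_mono) (auto simp: add_nonneg_pos)
        also have "\<dots> = e"
        proof -
          have "norm v + 1 \<noteq> 0" using norm_ge_zero[of v] by linarith
          then show ?thesis by simp
        qed
        finally show "\<bar>p k \<sigma> - p k \<sigma>'\<bar> < e" .
      qed
    qed
    have step: "p k b - p k a \<le> (b-a)*C*(U-L)"
      if ab: "0 \<le> a" "a \<le> b" "b \<le> t" and U: "\<forall>j \<sigma>. \<sigma>\<in>{a..b} \<longrightarrow> p j \<sigma> \<le> U"
        and L: "\<forall>\<sigma>\<in>{a..b}. L \<le> p k \<sigma>" for k a b U L
    proof -
      have b0: "b \<ge> 0" using ab by simp
      have fb: "f integrable_on {0..b}" using fint[OF b0] .
      have fab: "f integrable_on {a..b}" using integrable_on_subinterval[OF fb] ab by auto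
      have "x b - x a = integral {a..b} f"
        using xeq[OF b0] xeq[OF ab(1)] Henstock_Kurzweil_Integration.integral_combine[OF ab(1) ab(2) fb] by (simp, metis add_diff_cancel_left')
      then have "p k b - p k a = ((\<lambda>y. v \<bullet> (y $ k)) (integral {a..b} f))"
        unfolding p_def by (metis inner_diff_right vector_minus_component)
      also have "\<dots> = integral {a..b} ((\<lambda>y. v \<bullet> (y $ k)) \<circ> f)"
        by (rule integral_linear[symmetric, OF fab]) (intro bounded_linear_intros bounded_linear_vec_nth)
      also have "\<dots> \<le> integral {a..b} (\<lambda>s. C*(U-L))"
      proof (rule integral_le)
        show "((\<lambda>y. v \<bullet> (y $ k)) \<circ> f) integrable_on {a..b}"
          by (rule integrable_linear[OF fab]) (intro bounded_linear_intros bounded_linear_vec_nth)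
        show "(\<lambda>s. C*(U-L)) integrable_on {a..b}" by auto
        fix s assume s: "s \<in> {a..b}"
        have aab: "a \<in> {a..b}" using ab by simp
        have UL: "L \<le> U" using U[rule_format, OF aab, of k] L[rule_format, OF aab] by linarith
        have eq: "((\<lambda>y. v \<bullet> (y $ k)) \<circ> f) s = (1/N) * (\<Sum>j\<in>UNIV. (M k j s * w k j s) * (p j s - p k s))"
          unfolding f_def nonlin_field_def p_def w_def N_def
          by (simp add: inner_sum_right inner_diff_right sum_distrib_left algebra_simps)
        have hterm: "(M k j s * w k j s) * (p j s - p k s) \<le> C*(U-L)" for j
        proof -
          have s0: "s \<ge> 0" "s \<in> {0..t}" using s ab by auto
          have Mr: "0 \<le> M k j s" "M k j s \<le> 1" using M_range[OF s0(1)] by auto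
          have mw0: "0 \<le> M k j s * w k j s" using Mr wpos[of k j s] by simp
          have mwC: "M k j s * w k j s \<le> C"
            using mult_mono[OF Mr(2) wC[OF s0(2), of k j] _ less_imp_le[OF wpos[of k j s]]] by simp
          have "p j s - p k s \<le> U - L" using U[rule_format, OF s, of j] L[rule_format, OF s] by linarith
          then have "(M k j s * w k j s) * (p j s - p k s) \<le> (M k j s * w k j s) * (U - L)"
            using mw0 by (rule mult_left_mono)
          also have "\<dots> \<le> C * (U - L)" using mwC UL by (intro mult_right_mono) auto
          finally show ?thesis .
        qed
        have "(\<Sum>j\<in>UNIV. (M k j s * w k j s) * (p j s - p k s)) \<le> N * (C*(U-L))"
          unfolding N_def using sum_bounded_above[of UNIV "\<lambda>j. (M k j s * w k j s) * (p j s - p k s)" "C*(U-L)"] hterm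
          by simp
        then show "((\<lambda>y. v \<bullet> (y $ k)) \<circ> f) s \<le> C*(U-L)"
          unfolding eq using Npos by (simp add: field_simps)
      qed
      also have "\<dots> = (b-a)*C*(U-L)" using ab by simp
      finally show ?thesis .
    qed
    have pkt: "p k t \<le> Max (range (\<lambda>j. p j 0))"
      by (rule max_principle[OF uc C0 step t]) auto
    have "Max (range (\<lambda>j. p j 0)) \<in> range (\<lambda>j. p j 0)" by (rule Max_in) auto
    then obtain j where "Max (range (\<lambda>j. p j 0)) = p j 0" by blast
    note pkt this
    moreover have "p j 0 \<le> norm v * norm (x 0 $ j)" unfolding p_def by (rule Cauchy_Schwarz_ineq2[THEN order_trans[OF abs_ge_self]])
    moreover have "norm (x 0 $ j) \<le> R" unfolding R_def by (rule Max_ge) auto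
    moreover have "p k t = norm v * norm v" unfolding p_def v_def by (simp add: dot_square_norm power2_eq_square)
    moreover have "norm v * norm (x 0 $ j) \<le> norm v * R" by (rule mult_left_mono) (fact, simp)
    ultimately have vv: "norm v * norm v \<le> norm v * R" by linarith
    have R0: "R \<ge> 0" using \<open>norm (x 0 $ j) \<le> R\<close> norm_ge_zero order_trans by blast
    show ?thesis
    proof (cases "norm v = 0")
      case True then show ?thesis using R0 unfolding v_def by simp
    next
      case False then have "norm v > 0" by simp
      then show ?thesis using vv unfolding v_def by simp
    qed
  qed
  define K where "K = {y :: real^'d^'n. \<forall>k. norm (y $ k) \<le> R}"
  have R0: "R \<ge> 0"
  proof -
    have "norm (x 0 $ k) \<le> R" for k unfolding R_def by (rule Max_ge) auto
    then show ?thesis using norm_ge_zero order_trans by blast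
  qed
  have Kc: "compact K"
  proof -
    have "closed K" unfolding K_def
      by (intro closed_Collect_all closed_Collect_le continuous_intros)
    moreover have "bounded K"
    proof -
      have "norm y \<le> N * R" if "y \<in> K" for y
      proof -
        have "norm y \<le> (\<Sum>k\<in>UNIV. norm (y $ k))"
          unfolding norm_vec_def by (rule L2_set_le_sum) simp
        also have "\<dots> \<le> of_nat (card (UNIV :: 'n set)) * R"
          by (rule sum_bounded_above) (use that in \<open>auto simp: K_def\<close>)
        finally show ?thesis unfolding N_def by simp
      qed
      then show ?thesis unfolding bounded_iff by blast
    qed
    ultimately show ?thesis using compact_eq_bounded_closed by blast
  qed
  define g where "g ij y = lam (fst ij) y * phi (fst ij) (snd ij) (y $ fst ij) (y $ snd ij)" for ij y
  have gc: "continuous_on UNIV (g ij)" for ij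
  proof -
    obtain i j where ij: "ij = (i, j)" by (cases ij)
    have 2: "continuous_on UNIV (\<lambda>y::real^'d^'n. (y $ i, y $ j))"
      by (intro continuous_intros)
    have 3: "continuous_on UNIV (\<lambda>y::real^'d^'n. (\<lambda>(a, b). phi i j a b) (y $ i, y $ j))"
      by (rule continuous_on_compose2[OF phic 2]) auto
    show ?thesis unfolding g_def ij using continuous_on_mult[OF lamc 3] by simp
  qed
  have Weq: "W = (\<Union>ij\<in>UNIV. g ij ` K)"
    unfolding W_def weight_values_def g_def K_def by force
  have Wc: "compact W" unfolding Weq
    by (intro compact_UN finite_UNIV ballI compact_continuous_image[OF continuous_on_subset[OF gc] Kc]) auto
  have Wbd: "bdd_above W" "bdd_below W"
    using compact_imp_bounded[OF Wc] bounded_imp_bdd_above bounded_imp_bdd_below by auto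
  have Wpos: "z > 0" if "z \<in> W" for z
    using that lam_pos phi_pos unfolding W_def weight_values_def by auto
  have Wne: "W \<noteq> {}"
  proof -
    obtain i :: 'n where True by blast
    have "(0::real^'d^'n) \<in> K" unfolding K_def using R0 by simp
    then have "g (i, i) 0 \<in> W" unfolding Weq by blast
    then show ?thesis by blast
  qed
  have Inf0: "Inf W \<ge> 0" using Wne Wpos by (intro cInf_greatest) (auto intro: less_imp_le)
  have wW: "w i j s \<in> W" if "s \<ge> 0" for i j s
  proof -
    have "x s \<in> K" unfolding K_def using inv[OF that] by blast
    then show ?thesis unfolding Weq g_def w_def by force
  qed
  have wbounds: "Inf W \<le> w i j s" "w i j s \<le> Sup W" if "s \<ge> 0" for i j s
    using wW[OF that] Wbd by (auto intro: cInf_lower cSup_upper)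
  have Mtr: "0 \<le> Mt i j s" "Mt i j s \<le> Sup W" if "s \<ge> 0" for i j s
  proof -
    have Mr: "0 \<le> M i j s" "M i j s \<le> 1" using M_range[OF that] by auto
    show "0 \<le> Mt i j s" unfolding Mt_def using Mr wpos[of i j s] by simp
    have "Mt i j s \<le> 1 * w i j s" unfolding Mt_def
      using Mr wpos[of i j s] by (intro mult_right_mono) auto
    then show "Mt i j s \<le> Sup W" using wbounds(2)[OF that, of i j] by simp
  qed
  have Mmeas: "M i j \<in> borel_measurable (lebesgue_on {a..b})" if "a \<ge> 0" for i j a b
    by (rule measurable_restrict_mono[OF M_meas]) (use that in auto)
  have Mtint: "Mt i j absolutely_integrable_on {a..b}" if "a \<ge> 0" for i j a b
  proof (cases "a \<le> b")
    case False then show ?thesis by simp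
  next
    case True
    have wm: "w i j \<in> borel_measurable (lebesgue_on {a..b})"
      by (rule continuous_imp_measurable_on_sets_lebesgue[OF continuous_on_subset[OF wcont[of b]]])
        (use that True in auto)
    have "Mt i j \<in> borel_measurable (lebesgue_on {a..b})"
      unfolding Mt_def[abs_def] by (rule borel_measurable_times[OF Mmeas[OF that] wm])
    then show ?thesis
      by (rule measurable_bounded_by_integrable_imp_absolutely_integrable[where g = "\<lambda>_. Sup W"])
        (use that Mtr in auto)
  qed
  have Mint: "M i j absolutely_integrable_on {a..b}" if "a \<ge> 0" for i j a b
    by (rule measurable_bounded_by_integrable_imp_absolutely_integrable[OF Mmeas[OF that], where g = "\<lambda>_. 1"])
      (use that M_range in auto)
  have lin_eq1: "lin_field Mt s (x s) = f s" for s
    unfolding f_def lin_field_def nonlin_field_def Mt_def w_def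
    apply (rule vec_eq_iff[THEN iffD2], rule allI)
    apply (simp only: vec_lambda_beta scaleR_sum_right scaleR_scaleR)
    apply (rule sum.cong[OF refl])
    apply (rule arg_cong2[where f = scaleR, OF _ refl])
    apply (simp add: field_simps)
    done
  have lin_eq: "(\<lambda>s. lin_field Mt s (x s)) = f" using lin_eq1 by (rule ext)
  have carath: "caratheodory_solution (lin_field Mt) x"
  proof -
    have solf: "\<forall>t\<ge>0. f absolutely_integrable_on {0..t} \<and> x t = x 0 + integral {0..t} f"
      using sol unfolding caratheodory_solution_def f_def by blast
    then show ?thesis unfolding caratheodory_solution_def lin_eq by blast
  qed
  have key: "Inf W * \<mu> \<le> (1/T) * integral {t..t+T} (Mt i j)"
    if t: "t \<ge> 0" and h: "\<mu> \<le> (1/T) * integral {t..t+T} (M i j)" for t i j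
  proof -
    have I1: "M i j integrable_on {t..t+T}" using Mint[OF t] absolutely_integrable_on_def by blast
    have I2: "Mt i j integrable_on {t..t+T}" using Mtint[OF t] absolutely_integrable_on_def by blast
    have "integral {t..t+T} (\<lambda>s. Inf W * M i j s) \<le> integral {t..t+T} (Mt i j)"
    proof (rule integral_le)
      show "(\<lambda>s. Inf W * M i j s) integrable_on {t..t+T}" by (rule integrable_on_mult_right[OF I1])
      show "Mt i j integrable_on {t..t+T}" by (rule I2)
      fix s assume "s \<in> {t..t+T}"
      then have s: "s \<ge> 0" using t by auto
      show "Inf W * M i j s \<le> Mt i j s" unfolding Mt_def
        using wbounds(1)[OF s, of i j] M_range[OF s, of i j]
        by (metis atLeastAtMost_iff mult.commute mult_right_mono)
    qed
    then have A: "Inf W * integral {t..t+T} (M i j) \<le> integral {t..t+T} (Mt i j)" by simp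
    have "Inf W * \<mu> \<le> Inf W * ((1/T) * integral {t..t+T} (M i j))"
      by (rule mult_left_mono[OF h Inf0])
    also have "\<dots> = (1/T) * (Inf W * integral {t..t+T} (M i j))" by simp
    also have "\<dots> \<le> (1/T) * integral {t..t+T} (Mt i j)"
      using A T_pos by (intro mult_left_mono) auto
    finally show ?thesis .
  qed
  have P1: "\<forall>i j. (\<forall>t\<ge>0. Mt i j absolutely_integrable_on {0..t}) \<and> (\<forall>t\<ge>0. Mt i j t \<in> {0..Sup W})"
    using Mtint Mtr by auto
  have P3: "\<forall>t\<ge>0. conn_graph T \<mu> M t \<subseteq> conn_graph T (Inf W * \<mu>) Mt t"
    unfolding conn_graph_def using key by auto
  show ?thesis unfolding R_def[symmetric] W_def[symmetric] using P1 carath P3 by blast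
qed

end
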